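(* Let $\{m_k:k\ge0\}$ be positive reals with $\sum_k m_k=\infty$ and $m_k\to0$; let $S_0=0$ and $S_{k+1}=\sum_{i=0}^k m_i$. Define $f_j:(S_j,S_{j+1}]\to\mathbb{R}$, $j\ge0$, recursively with $c_0=0$ and $c_j=f_{j-1}(S_j)$ for $j\ge1$, by $$f_j(x)=\begin{cases}-x+S_j+c_j & x\in(S_j,S_j+\tfrac{m_j}{16})\\ \tfrac{8}{m_j}(x-S_j-\tfrac{m_j}{8})^2-\tfrac{3m_j}{32}+c_j & x\in[S_j+\tfrac{m_j}{16},S_j+\tfrac{3m_j}{16})\\ -\tfrac{5m_j}{16}\exp\!\big(\tfrac{5m_j/16}{x-S_j-m_j/2}+1\big)+\tfrac{m_j}{4}+c_j & x\in[S_j+\tfrac{3m_j}{16},S_j+\tfrac{m_j}{2})\\ \tfrac{m_j}{4}+c_j & x=S_j+\tfrac{m_j}{2}\\ \tfrac{5m_j}{16}\exp\!\big(\tfrac{-5m_j/16}{x-S_j-m_j/2}+1\big)+\tfrac{m_j}{4}+c_j & x\in(S_j+\tfrac{m_j}{2},S_j+\tfrac{13m_j}{16})\\ -\tfrac{8}{m_j}(x-S_j-\tfrac{7m_j}{8})^2+\tfrac{19m_j}{32}+c_j & x\in[S_j+\tfrac{13m_j}{16},S_j+\tfrac{15m_j}{16})\\ -x+S_j+\tfrac{3m_j}{2}+c_j & x\in[S_j+\tfrac{15m_j}{16},S_{j+1}],\end{cases}$$ and define $F:\mathbb{R}\to\mathbb{R}$ by $F(x)=-x$ for $x\le0$ and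 $F(x)=f_j(x)$ for $x\in(S_j,S_{j+1}]$, $j\ge0$. Then $F$ is continuous and differentiable on $\mathbb{R}$, is bounded from below, and its derivative $\dot F$ is locally Lipschitz continuous. Moreover, $F(S_j)=S_j/2$ and $\dot F(S_j)=-1$ for all $j\ge0$. *)

theory Defs
  imports "HOL-Analysis.Analysis"
begin

definition partS :: "(nat \<Rightarrow> real) \<Rightarrow> nat \<Rightarrow> real" where
  "partS m j = (\<Sum>i<j. m i)"

text \<open>The piece f_j on (S_j, S_(j+1)] with offset constant c = c_j
  (values outside (S_j, S_(j+1)] are irrelevant).\<close>
definition fpiece :: "(nat \<Rightarrow> real) \<Rightarrow> real \<Rightarrow> nat \<Rightarrow> real \<Rightarrow> real" where
  "fpiece m c j x =
    (let s = partS m j; mj = m j in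
     if x < s + mj/16 then - x + s + c
     else if x < s + 3*mj/16 then 8/mj * (x - s - mj/8)^2 - 3*mj/32 + c
     else if x < s + mj/2 then
       - (5*mj/16) * exp ((5*mj/16) / (x - s - mj/2) + 1) + mj/4 + c
     else if x = s + mj/2 then mj/4 + c
     else if x < s + 13*mj/16 then
       (5*mj/16) * exp ((- 5*mj/16) / (x - s - mj/2) + 1) + mj/4 + c
     else if x < s + 15*mj/16 then - 8/mj * (x - s - 7*mj/8)^2 + 19*mj/32 + c
     else - x + s + 3*mj/2 + c)"

primrec cconst :: "(nat \<Rightarrow> real) \<Rightarrow> nat \<Rightarrow> real" where
  "cconst m 0 = 0"
| "cconst m (Suc j) = fpiece m (cconst m j) j (partS m (Suc j))"

definition fj :: "(nat \<Rightarrow> real) \<Rightarrow> nat \<Rightarrow> real \<Rightarrow> real" where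
  "fj m j x = fpiece m (cconst m j) j x"

definition bigF :: "(nat \<Rightarrow> real) \<Rightarrow> real \<Rightarrow> real" where
  "bigF m x = (if x \<le> 0 then - x
     else fj m (THE j. partS m j < x \<and> x \<le> partS m (Suc j)) x)"

end

theory Submission
  imports Defs "HOL-Real_Asymp.Real_Asymp"
begin


definition Ef :: "real \<Rightarrow> real" where
  "Ef t = (if t = 0 then 0 else (5/16)^2 / t^2 * exp (1 - (5/16)/\<bar>t\<bar>))"
definition Qf :: "real \<Rightarrow> real" where
  "Qf t = (if t = 0 then 0 else sgn t * (5/16) * exp (1 - (5/16)/\<bar>t\<bar>))"

lemma isCont_open_transform:
  assumes "isCont g t" "open S" "t \<in> S" "\<And>y. y \<in> S \<Longrightarrow> f y = g y"
  shows "isCont f t"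
proof -
  have "eventually (\<lambda>y. f y = g y) (nhds t)"
    using eventually_nhds_in_open[OF assms(2,3)] by eventually_elim (use assms(4) in auto)
  then show ?thesis using isCont_cong assms(1) by blast
qed

lemma ev_right01: "eventually (\<lambda>x::real. x \<in> {0<..<1}) (at_right 0)"
  by (rule eventually_at_right_real) simp
lemma ev_left01: "eventually (\<lambda>x::real. x \<in> {-1<..<0}) (at_left 0)"
  by (rule eventually_at_left_real) simp

lemma Qf_deriv: "(Qf has_real_derivative Ef t) (at t)"
proof -
  consider "t > 0" | "t < 0" | "t = 0" by linarith
  then show ?thesis
  proof cases
    case 1
    have "((\<lambda>t. (5/16) * exp (1 - (5/16)/t)) has_real_derivative Ef t) (at t)"
      using 1 by (auto intro!: derivative_eq_intros simp: Ef_def power2_eq_square field_simps)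
    then show ?thesis
      by (rule has_field_derivative_transform_within_open[where S="{0<..}"]) (use 1 in \<open>auto simp: Qf_def\<close>)
  next
    case 2
    have "((\<lambda>t. -(5/16) * exp (1 + (5/16)/t)) has_real_derivative Ef t) (at t)"
      using 2 by (auto intro!: derivative_eq_intros simp: Ef_def power2_eq_square field_simps)
    then show ?thesis
      by (rule has_field_derivative_transform_within_open[where S="{..<0}"]) (use 2 in \<open>auto simp: Qf_def\<close>)
  next
    case 3
    have r: "((\<lambda>y::real. (5/16) * exp (1 - (5/16)/y) / y) \<longlongrightarrow> 0) (at_right 0)"
      by real_asymp
    have l: "((\<lambda>y::real. -(5/16) * exp (1 + (5/16)/y) / y) \<longlongrightarrow> 0) (at_left 0)"
      by real_asymp
    have r': "((\<lambda>y. (Qf y - Qf 0) / (y - 0)) \<longlongrightarrow> 0) (at_right 0)"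
    proof (rule Lim_transform_eventually[OF r])
      show "\<forall>\<^sub>F x in at_right 0. 5 / 16 * exp (1 - 5 / 16 / x) / x = (Qf x - Qf 0) / (x - 0)"
        using ev_right01 by eventually_elim (auto simp: Qf_def)
    qed
    have l': "((\<lambda>y. (Qf y - Qf 0) / (y - 0)) \<longlongrightarrow> 0) (at_left 0)"
    proof (rule Lim_transform_eventually[OF l])
      show "\<forall>\<^sub>F x in at_left 0. -(5 / 16) * exp (1 + 5 / 16 / x) / x = (Qf x - Qf 0) / (x - 0)"
        using ev_left01 by eventually_elim (auto simp: Qf_def)
    qed
    show ?thesis using 3 r' l'
      by (auto simp: has_field_derivative_iff filterlim_at_split Ef_def)
  qed
qed

lemma Ef_cont: "isCont Ef t"
proof -
  consider "t > 0" | "t < 0" | "t = 0" by linarith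
  then show ?thesis
  proof cases
    case 1
    have "isCont (\<lambda>t. (5/16)^2 / t^2 * exp (1 - (5/16)/t)) t"
      using 1 by (auto intro!: continuous_intros)
    then show ?thesis
      by (rule isCont_open_transform[where S="{0<..}"]) (use 1 in \<open>auto simp: Ef_def\<close>)
  next
    case 2
    have "isCont (\<lambda>t. (5/16)^2 / t^2 * exp (1 + (5/16)/t)) t"
      using 2 by (auto intro!: continuous_intros)
    then show ?thesis
      by (rule isCont_open_transform[where S="{..<0}"]) (use 2 in \<open>auto simp: Ef_def\<close>)
  next
    case 3
    have r: "((\<lambda>y::real. (5/16)^2 / y^2 * exp (1 - (5/16)/y)) \<longlongrightarrow> 0) (at_right 0)"
      by real_asymp
    have l: "((\<lambda>y::real. (5/16)^2 / y^2 * exp (1 + (5/16)/y)) \<longlongrightarrow> 0) (at_left 0)"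
      by real_asymp
    have r': "(Ef \<longlongrightarrow> 0) (at_right 0)"
    proof (rule Lim_transform_eventually[OF r])
      show "\<forall>\<^sub>F x in at_right 0. (5/16)^2 / x^2 * exp (1 - (5/16)/x) = Ef x"
        using ev_right01 by eventually_elim (auto simp: Ef_def)
    qed
    have l': "(Ef \<longlongrightarrow> 0) (at_left 0)"
    proof (rule Lim_transform_eventually[OF l])
      show "\<forall>\<^sub>F x in at_left 0. (5/16)^2 / x^2 * exp (1 + (5/16)/x) = Ef x"
        using ev_left01 by eventually_elim (auto simp: Ef_def)
    qed
    show ?thesis using 3 r' l'
      by (auto simp: isCont_def filterlim_at_split Ef_def)
  qed
qed

definition E2 :: "real \<Rightarrow> real" where
  "E2 t = (5/16)^2 * exp (1 - (5/16)/t) * ((5/16)/t^4 - 2/t^3)"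

lemma Ef_deriv_pos: "t > 0 \<Longrightarrow> (Ef has_real_derivative E2 t) (at t)"
proof -
  assume t: "t > 0"
  have "((\<lambda>t. (5/16)^2 / t^2 * exp (1 - (5/16)/t)) has_real_derivative E2 t) (at t)"
    using t by (auto intro!: derivative_eq_intros simp: E2_def power2_eq_square field_simps eval_nat_numeral)
  then show ?thesis
    by (rule has_field_derivative_transform_within_open[where S="{0<..}"]) (use t in \<open>auto simp: Ef_def\<close>)
qed

lemma pow4_le_exp: "x \<ge> 0 \<Longrightarrow> x^4 \<le> 256 * exp (x::real)"
proof -
  assume x: "x \<ge> 0"
  have "(1 + x / of_nat 4) ^ 4 \<le> exp x"
    by (rule exp_ge_one_plus_x_over_n_power_n) (use x in auto)
  moreover have "(x/4)^4 \<le> (1 + x/4)^4"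
    by (rule power_mono) (use x in auto)
  ultimately show ?thesis by (simp add: power_divide)
qed

lemma pow3_le_exp: "x \<ge> 0 \<Longrightarrow> x^3 \<le> 27 * exp (x::real)"
proof -
  assume x: "x \<ge> 0"
  have "(1 + x / of_nat 3) ^ 3 \<le> exp x"
    by (rule exp_ge_one_plus_x_over_n_power_n) (use x in auto)
  moreover have "(x/3)^3 \<le> (1 + x/3)^3"
    by (rule power_mono) (use x in auto)
  ultimately show ?thesis by (simp add: power_divide)
qed

lemma E2_bound: "t > 0 \<Longrightarrow> \<bar>E2 t\<bar> \<le> 3000"
proof -
  assume t: "t > 0"
  define x where "x = (5/16)/t"
  have x: "x > 0" using t by (simp add: x_def)
  have tx: "t = (5/16)/x" using t by (simp add: x_def)
  have "E2 t = exp 1 * (x^4 - 2*x^3) / exp x * (16/5)"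
    unfolding E2_def tx using x by (simp add: exp_diff field_simps eval_nat_numeral)
  also have "\<bar>\<dots>\<bar> = exp 1 * \<bar>x^4 - 2*x^3\<bar> / exp x * (16/5)"
    by (simp add: abs_mult)
  also have "\<dots> \<le> exp 1 * (310 * exp x) / exp x * (16/5)"
  proof -
    have "\<bar>x^4 - 2*x^3\<bar> \<le> 310 * exp x"
      using pow4_le_exp[of x] pow3_le_exp[of x] x by (simp add: abs_le_iff) (smt (verit) zero_le_power)
    then show ?thesis by (intro mult_right_mono divide_right_mono mult_left_mono) auto
  qed
  also have "\<dots> = exp 1 * 310 * (16/5)" by simp
  also have "\<dots> \<le> 3000" using exp_le by simp
  finally show ?thesis .
qed

lemma lip_from_deriv:
  fixes g g' :: "real \<Rightarrow> real"
  assumes cont: "continuous_on {p..q} g"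
    and der: "\<And>z. p < z \<Longrightarrow> z < q \<Longrightarrow> (g has_real_derivative g' z) (at z)"
    and bd: "\<And>z. p < z \<Longrightarrow> z < q \<Longrightarrow> \<bar>g' z\<bar> \<le> K" and K: "0 \<le> K"
  shows "K-lipschitz_on {p..q} g"
proof (rule lipschitz_on_leI)
  fix x y assume x: "x \<in> {p..q}" and y: "y \<in> {p..q}" and xy: "x \<le> y"
  show "dist (g x) (g y) \<le> K * dist x y"
  proof (cases "x = y")
    case False
    then have lt: "x < y" using xy by simp
    have "continuous_on {x..y} g" using x y by (intro continuous_on_subset[OF cont]) auto
    moreover have "\<And>z. x < z \<Longrightarrow> z < y \<Longrightarrow> g differentiable (at z)"
      using der x y by (meson atLeastAtMost_iff less_le_trans le_less_trans real_differentiable_def)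
    ultimately obtain l z where z: "x < z" "z < y" "DERIV g z :> l" "g y - g x = (y - x) * l"
      using MVT[OF lt] by blast
    have "l = g' z" using DERIV_unique[OF z(3) der] z x y by auto
    then have "\<bar>l\<bar> \<le> K" using bd z x y by auto
    then have "\<bar>g y - g x\<bar> \<le> (y - x) * K" using z(4) lt by (simp add: abs_mult mult_left_mono)
    then show ?thesis using xy by (simp add: dist_real_def abs_minus_commute mult.commute)
  qed (use K in auto)
qed (use K in auto)

lemma lip_glue:
  fixes g :: "real \<Rightarrow> real"
  assumes "L-lipschitz_on S g" "L-lipschitz_on T g" "b \<in> S" "b \<in> T"
    "\<And>x. x \<in> S \<Longrightarrow> x \<le> b" "\<And>y. y \<in> T \<Longrightarrow> b \<le> y"
  shows "L-lipschitz_on (S \<union> T) g"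
proof -
  have L: "0 \<le> L" using assms(1) lipschitz_on_nonneg by blast
  have key: "dist (g x) (g y) \<le> L * dist x y" if x: "x \<in> S" and y: "y \<in> T" for x y
  proof -
    have "dist (g x) (g y) \<le> dist (g x) (g b) + dist (g b) (g y)" by (rule dist_triangle)
    also have "\<dots> \<le> L * dist x b + L * dist b y"
      using lipschitz_onD[OF assms(1) x assms(3)] lipschitz_onD[OF assms(2) assms(4) y] by linarith
    also have "\<dots> = L * dist x y"
      using assms(5)[OF x] assms(6)[OF y] by (simp add: dist_real_def algebra_simps)
    finally show ?thesis .
  qed
  show ?thesis
  proof (rule lipschitz_onI)
    fix x y assume "x \<in> S \<union> T" "y \<in> S \<union> T"
    then consider "x \<in> S" "y \<in> S" | "x \<in> T" "y \<in> T" | "x \<in> S" "y \<in> T" | "x \<in> T" "y \<in> S" by blast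
    then show "dist (g x) (g y) \<le> L * dist x y"
    proof cases
      case 1 then show ?thesis using lipschitz_onD[OF assms(1)] by blast
    next
      case 2 then show ?thesis using lipschitz_onD[OF assms(2)] by blast
    next
      case 3 then show ?thesis using key by blast
    next
      case 4 then show ?thesis using key[of y x] by (simp add: dist_commute)
    qed
  qed (rule L)
qed

lemma Ef_even: "Ef (-t) = Ef t"
  by (simp add: Ef_def)

lemma Ef_lip_pos: "3000-lipschitz_on {0..5/16} Ef"
  by (rule lip_from_deriv[where g'=E2])
     (auto intro!: continuous_at_imp_continuous_on Ef_cont Ef_deriv_pos E2_bound)

lemma Ef_lip: "3000-lipschitz_on {-5/16..5/16} Ef"
proof -
  have neg: "3000-lipschitz_on {-5/16..0} Ef"
  proof (rule lipschitz_onI)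
    fix x y :: real assume "x \<in> {-5/16..0}" "y \<in> {-5/16..0}"
    then have "dist (Ef (-x)) (Ef (-y)) \<le> 3000 * dist (-x) (-y)"
      by (intro lipschitz_onD[OF Ef_lip_pos]) auto
    then show "dist (Ef x) (Ef y) \<le> 3000 * dist x y"
      by (simp add: Ef_even dist_real_def abs_minus_commute)
  qed simp
  have "3000-lipschitz_on ({-5/16..0} \<union> {0..5/16}) Ef"
    by (rule lip_glue[OF neg Ef_lip_pos, of 0]) auto
  moreover have "{-5/16..0} \<union> {0..5/16} = {-5/16..5/16::real}" by auto
  ultimately show ?thesis by simp
qed


lemma deriv_glue:
  fixes f A B :: "real \<Rightarrow> real"
  assumes d: "\<delta> > 0"
    and fA: "\<And>y. b - \<delta> < y \<Longrightarrow> y < b \<Longrightarrow> f y = A y"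
    and fB: "\<And>y. b < y \<Longrightarrow> y < b + \<delta> \<Longrightarrow> f y = B y"
    and fbA: "f b = A b" and fbB: "f b = B b"
    and dA: "(A has_real_derivative D) (at b)"
    and dB: "(B has_real_derivative D) (at b)"
  shows "(f has_real_derivative D) (at b)"
proof -
  have lA: "((\<lambda>y. (A y - A b) / (y - b)) \<longlongrightarrow> D) (at_left b)"
    using dA unfolding has_field_derivative_iff by (rule tendsto_mono[OF at_le, rotated]) simp
  have lB: "((\<lambda>y. (B y - B b) / (y - b)) \<longlongrightarrow> D) (at_right b)"
    using dB unfolding has_field_derivative_iff by (rule tendsto_mono[OF at_le, rotated]) simp
  have eA: "eventually (\<lambda>y. y \<in> {b - \<delta><..<b}) (at_left b)"
    by (rule eventually_at_left_real) (use d in simp)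
  have eB: "eventually (\<lambda>y. y \<in> {b<..<b + \<delta>}) (at_right b)"
    by (rule eventually_at_right_real) (use d in simp)
  note fb = fbA fbB
  have l: "((\<lambda>y. (f y - f b) / (y - b)) \<longlongrightarrow> D) (at_left b)"
    by (rule Lim_transform_eventually[OF lA]) (use eA in \<open>eventually_elim, use fA fb in auto\<close>)
  have r: "((\<lambda>y. (f y - f b) / (y - b)) \<longlongrightarrow> D) (at_right b)"
    by (rule Lim_transform_eventually[OF lB]) (use eB in \<open>eventually_elim, use fB fb in auto\<close>)
  show ?thesis using l r unfolding has_field_derivative_iff filterlim_at_split by simp
qed

definition phi :: "real \<Rightarrow> real" where
  "phi u = (if u < 1/16 then - u
     else if u < 3/16 then 8 * (u - 1/8)^2 - 3/32
     else if u < 1/2 then - (5/16) * exp ((5/16) / (u - 1/2) + 1) + 1/4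
     else if u = 1/2 then 1/4
     else if u < 13/16 then (5/16) * exp ((- 5/16) / (u - 1/2) + 1) + 1/4
     else if u < 15/16 then - 8 * (u - 7/8)^2 + 19/32
     else - u + 3/2)"

definition dphi :: "real \<Rightarrow> real" where
  "dphi u = (if u < 1/16 then -1
     else if u < 3/16 then 16 * (u - 1/8)
     else if u < 13/16 then Ef (u - 1/2)
     else if u < 15/16 then - 16 * (u - 7/8)
     else -1)"

lemma phi_mid: "3/16 \<le> u \<Longrightarrow> u < 13/16 \<Longrightarrow> phi u = 1/4 + Qf (u - 1/2)"
  by (auto simp: phi_def Qf_def field_simps)

lemma Qm_deriv: "((\<lambda>u. 1/4 + Qf (u - 1/2)) has_real_derivative Ef (u - 1/2)) (at u)"
proof -
  have "((\<lambda>u. Qf (u - 1/2)) has_real_derivative Ef (u - 1/2) * 1) (at u)"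
    by (rule DERIV_chain2[OF Qf_deriv]) (auto intro!: derivative_eq_intros)
  then show ?thesis by (auto intro!: derivative_eq_intros)
qed

lemma Ef_at: "Ef (-5/16) = 1" "Ef (5/16) = 1" "Ef (- (5/16)) = 1"
  by (simp_all add: Ef_def)

lemma phi_deriv: "(phi has_real_derivative dphi u) (at u)"
proof -
  consider "u < 1/16" | "u = 1/16" | "1/16 < u \<and> u < 3/16" | "u = 3/16"
    | "3/16 < u \<and> u < 13/16" | "u = 13/16" | "13/16 < u \<and> u < 15/16" | "u = 15/16" | "u > 15/16"
    by linarith
  then show ?thesis
  proof cases
    case 1
    have "((\<lambda>u. - u) has_real_derivative dphi u) (at u)"
      using 1 by (auto intro!: derivative_eq_intros simp: dphi_def)
    then show ?thesis
      by (rule has_field_derivative_transform_within_open[where S="{..<1/16}"]) (use 1 in \<open>auto simp: phi_def\<close>)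
  next
    case 2
    have "(phi has_real_derivative dphi (1/16)) (at (1/16))"
      by (rule deriv_glue[where \<delta>="1/16" and A="\<lambda>u. - u" and B="\<lambda>u. 8 * (u - 1/8)^2 - 3/32"])
         (use in \<open>auto intro!: derivative_eq_intros simp: phi_def dphi_def power2_eq_square\<close>)
    then show ?thesis using 2 by (simp del: times_divide_eq_right divide_const_simps)
  next
    case 3
    have "((\<lambda>u. 8 * (u - 1/8)^2 - 3/32) has_real_derivative dphi u) (at u)"
      using 3 by (auto intro!: derivative_eq_intros simp: dphi_def)
    then show ?thesis
      by (rule has_field_derivative_transform_within_open[where S="{1/16<..<3/16}"]) (use 3 in \<open>auto simp: phi_def\<close>)
  next
    case 4
    have "(phi has_real_derivative dphi (3/16)) (at (3/16))"
      apply (rule deriv_glue[where \<delta>="1/16" and A="\<lambda>u. 8 * (u - 1/8)^2 - 3/32" and B="\<lambda>u. 1/4 + Qf (u - 1/2)"])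
      subgoal by simp
      subgoal by (simp add: phi_def)
      subgoal by (rule phi_mid) auto
      subgoal by (simp add: phi_def power2_eq_square)
      subgoal by (rule phi_mid) auto
      subgoal by (auto intro!: derivative_eq_intros simp: dphi_def Ef_at)
      subgoal using Qm_deriv[of "3/16"] by (simp add: dphi_def Ef_at)
      done
    then show ?thesis using 4 by (simp del: times_divide_eq_right divide_const_simps)
  next
    case 5
    have "((\<lambda>u. 1/4 + Qf (u - 1/2)) has_real_derivative dphi u) (at u)"
      using 5 Qm_deriv[of u] by (auto simp: dphi_def)
    then show ?thesis
      by (rule has_field_derivative_transform_within_open[where S="{3/16<..<13/16}"]) (use 5 phi_mid in \<open>auto\<close>)
  next
    case 6
    have "(phi has_real_derivative dphi (13/16)) (at (13/16))"
      apply (rule deriv_glue[where \<delta>="1/16" and A="\<lambda>u. 1/4 + Qf (u - 1/2)" and B="\<lambda>u. - 8 * (u - 7/8)^2 + 19/32"])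
      subgoal by simp
      subgoal by (rule phi_mid) auto
      subgoal by (simp add: phi_def)
      subgoal by (simp add: phi_def Qf_def power2_eq_square)
      subgoal by (simp add: phi_def power2_eq_square)
      subgoal using Qm_deriv[of "13/16"] by (simp add: dphi_def Ef_at)
      subgoal by (auto intro!: derivative_eq_intros simp: dphi_def Ef_at)
      done
    then show ?thesis using 6 by (simp del: times_divide_eq_right divide_const_simps)
  next
    case 7
    have "((\<lambda>u. - 8 * (u - 7/8)^2 + 19/32) has_real_derivative dphi u) (at u)"
      using 7 by (auto intro!: derivative_eq_intros simp: dphi_def)
    then show ?thesis
      by (rule has_field_derivative_transform_within_open[where S="{13/16<..<15/16}"]) (use 7 in \<open>auto simp: phi_def\<close>)
  next
    case 8
    have "(phi has_real_derivative dphi (15/16)) (at (15/16))"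
      by (rule deriv_glue[where \<delta>="1/16" and A="\<lambda>u. - 8 * (u - 7/8)^2 + 19/32" and B="\<lambda>u. - u + 3/2"])
         (use in \<open>auto intro!: derivative_eq_intros simp: phi_def dphi_def power2_eq_square\<close>)
    then show ?thesis using 8 by (simp del: times_divide_eq_right divide_const_simps)
  next
    case 9
    have "((\<lambda>u. - u + 3/2) has_real_derivative dphi u) (at u)"
      using 9 by (auto intro!: derivative_eq_intros simp: dphi_def)
    then show ?thesis
      by (rule has_field_derivative_transform_within_open[where S="{15/16<..}"]) (use 9 in \<open>auto simp: phi_def\<close>)
  qed
qed


lemma dphi_b: "1/16 \<le> x \<Longrightarrow> x \<le> 3/16 \<Longrightarrow> dphi x = 16 * (x - 1/8)"
proof (cases "x = 3/16")
  case True then show ?thesis unfolding True by (simp add: dphi_def Ef_at)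
qed (auto simp: dphi_def)

lemma dphi_c: "3/16 \<le> x \<Longrightarrow> x \<le> 13/16 \<Longrightarrow> dphi x = Ef (x - 1/2)"
proof (cases "x = 13/16")
  case True then show ?thesis unfolding True by (simp add: dphi_def Ef_at)
qed (auto simp: dphi_def)

lemma dphi_lip: "3000-lipschitz_on UNIV dphi"
proof -
  have La: "3000-lipschitz_on {..1/16} dphi"
  proof (rule lipschitz_onI)
    fix x y :: real assume "x \<in> {..1/16}" "y \<in> {..1/16}"
    then have "dphi x = -1" "dphi y = -1" by (auto simp: dphi_def)
    then show "dist (dphi x) (dphi y) \<le> 3000 * dist x y" by simp
  qed simp
  have Lb: "3000-lipschitz_on {1/16..3/16} dphi"
  proof (rule lipschitz_onI)
    fix x y :: real assume "x \<in> {1/16..3/16}" "y \<in> {1/16..3/16}"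
    then have "dphi x = 16 * (x - 1/8)" "dphi y = 16 * (y - 1/8)" by (auto simp: dphi_b)
    then show "dist (dphi x) (dphi y) \<le> 3000 * dist x y" unfolding dist_real_def by smt
  qed simp
  have Lc: "3000-lipschitz_on {3/16..13/16} dphi"
  proof (rule lipschitz_onI)
    fix x y :: real assume xy: "x \<in> {3/16..13/16}" "y \<in> {3/16..13/16}"
    then have "dphi x = Ef (x - 1/2)" "dphi y = Ef (y - 1/2)"
      by (auto simp: dphi_c)
    moreover have "dist (Ef (x - 1/2)) (Ef (y - 1/2)) \<le> 3000 * dist (x - 1/2) (y - 1/2)"
      by (rule lipschitz_onD[OF Ef_lip]) (use xy in auto)
    ultimately show "dist (dphi x) (dphi y) \<le> 3000 * dist x y" by (simp add: dist_real_def)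
  qed simp
  have Ld: "3000-lipschitz_on {13/16..15/16} dphi"
  proof (rule lipschitz_onI)
    fix x y :: real assume "x \<in> {13/16..15/16}" "y \<in> {13/16..15/16}"
    then have "dphi x = - 16 * (x - 7/8)" "dphi y = - 16 * (y - 7/8)" by (auto simp: dphi_def)
    then show "dist (dphi x) (dphi y) \<le> 3000 * dist x y" unfolding dist_real_def by smt
  qed simp
  have Le: "3000-lipschitz_on {15/16..} dphi"
  proof (rule lipschitz_onI)
    fix x y :: real assume "x \<in> {15/16..}" "y \<in> {15/16..}"
    then have "dphi x = -1" "dphi y = -1" by (auto simp: dphi_def)
    then show "dist (dphi x) (dphi y) \<le> 3000 * dist x y" by simp
  qed simp
  have 1: "3000-lipschitz_on ({..1/16} \<union> {1/16..3/16}) dphi"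
    by (rule lip_glue[OF La Lb, of "1/16"]) auto
  have 2: "3000-lipschitz_on (({..1/16} \<union> {1/16..3/16}) \<union> {3/16..13/16}) dphi"
    by (rule lip_glue[OF 1 Lc, of "3/16"]) auto
  have 3: "3000-lipschitz_on ((({..1/16} \<union> {1/16..3/16}) \<union> {3/16..13/16}) \<union> {13/16..15/16}) dphi"
    by (rule lip_glue[OF 2 Ld, of "13/16"]) auto
  have 4: "3000-lipschitz_on (((({..1/16} \<union> {1/16..3/16}) \<union> {3/16..13/16}) \<union> {13/16..15/16}) \<union> {15/16..}) dphi"
    by (rule lip_glue[OF 3 Le, of "15/16"]) auto
  moreover have "(((({..1/16} \<union> {1/16..3/16}) \<union> {3/16..13/16}) \<union> {13/16..15/16}) \<union> {15/16..}) = (UNIV::real set)"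
    by auto
  ultimately show ?thesis by simp
qed



lemma fpiece_eq:
  assumes M: "m j > 0"
  shows "fpiece m c j x = c + m j * phi ((x - partS m j) / m j)"
proof -
  define s where "s = partS m j"
  define M where "M = m j"
  define u where "u = (x - s) / M"
  have Mp: "M > 0" using M by (simp add: M_def)
  have x: "x = s + M * u" using Mp by (simp add: u_def)
  have c1: "(x < s + M/16) = (u < 1/16)" "(x < s + 3*M/16) = (u < 3/16)"
    "(x < s + M/2) = (u < 1/2)" "(x = s + M/2) = (u = 1/2)"
    "(x < s + 13*M/16) = (u < 13/16)" "(x < s + 15*M/16) = (u < 15/16)"
    unfolding x using Mp by (auto simp: field_simps)
  have xs: "x - s - M/2 = M * (u - 1/2)" unfolding x by (simp add: algebra_simps)
  have e1: "(5*M/16) / (x - s - M/2) = (5/16) / (u - 1/2)"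
    unfolding xs using Mp by (cases "u = 1/2") (auto simp: field_simps)
  have e2: "(- 5*M/16) / (x - s - M/2) = (- 5/16) / (u - 1/2)"
    unfolding xs using Mp by (cases "u = 1/2") (auto simp: field_simps)
  have "fpiece m c j x = (if u < 1/16 then - x + s + c
     else if u < 3/16 then 8/M * (x - s - M/8)^2 - 3*M/32 + c
     else if u < 1/2 then
       - (5*M/16) * exp ((5/16) / (u - 1/2) + 1) + M/4 + c
     else if u = 1/2 then M/4 + c
     else if u < 13/16 then
       (5*M/16) * exp ((- 5/16) / (u - 1/2) + 1) + M/4 + c
     else if u < 15/16 then - 8/M * (x - s - 7*M/8)^2 + 19*M/32 + c
     else - x + s + 3*M/2 + c)"
    unfolding fpiece_def Let_def s_def[symmetric] M_def[symmetric] c1 e1 e2 by simp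
  also have "\<dots> = c + M * phi u"
    unfolding phi_def x using Mp by (auto simp: field_simps power2_eq_square)
  finally show ?thesis by (simp add: u_def s_def M_def)
qed

lemma partS_Suc: "partS m (Suc j) = partS m j + m j"
  by (simp add: partS_def)

lemma partS_0: "partS m 0 = 0"
  by (simp add: partS_def)

lemma phi_0: "phi 0 = 0" and phi_1: "phi 1 = 1/2"
  by (simp_all add: phi_def)

lemma cconst_eq:
  assumes pos: "\<And>k. m k > 0"
  shows "cconst m j = partS m j / 2"
proof (induction j)
  case 0 then show ?case by (simp add: partS_0)
next
  case (Suc j)
  have "cconst m (Suc j) = cconst m j + m j * phi ((partS m (Suc j) - partS m j) / m j)"
    by (simp add: fpiece_eq[where m=m, OF pos])
  also have "\<dots> = partS m (Suc j) / 2"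
    using Suc pos[of j] by (simp add: partS_Suc phi_1)
  finally show ?case .
qed

definition G :: "(nat \<Rightarrow> real) \<Rightarrow> nat \<Rightarrow> real \<Rightarrow> real" where
  "G m j x = partS m j / 2 + m j * phi ((x - partS m j) / m j)"

lemma fj_eq:
  assumes pos: "\<And>k. m k > 0"
  shows "fj m j x = G m j x"
  by (simp add: fj_def fpiece_eq[where m=m, OF pos] cconst_eq[where m=m, OF pos] G_def)

lemma partS_strict:
  assumes pos: "\<And>k. m k > 0"
  shows "strict_mono (partS m)"
  by (rule strict_monoI_Suc) (simp add: partS_Suc pos)

lemma partS_less:
  assumes pos: "\<And>k. m k > 0" and "i < k"
  shows "partS m i < partS m k"
  using partS_strict[where m=m, OF pos] assms(2) by (simp add: strict_mono_less)

lemma partS_le: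
  assumes pos: "\<And>k. m k > 0" and "i \<le> k"
  shows "partS m i \<le> partS m k"
  using partS_strict[where m=m, OF pos] assms(2) by (simp add: strict_mono_less_eq)

lemma partS_nonneg:
  assumes pos: "\<And>k. m k > 0"
  shows "partS m j \<ge> 0"
  using partS_le[where m=m, OF pos, where i=0 and k=j] by (simp add: partS_0)

lemma partS_exists:
  assumes pos: "\<And>k. m k > 0"
    and div: "filterlim (\<lambda>n. \<Sum>k<n. m k) at_top sequentially"
    and x: "x \<ge> 0"
  shows "\<exists>j. partS m j \<le> x \<and> x < partS m (Suc j)"
proof -
  have "eventually (\<lambda>n. x + 1 \<le> (\<Sum>k<n. m k)) sequentially"
    using div by (simp add: filterlim_at_top)
  then obtain N where "x + 1 \<le> partS m N"
    by (auto simp: eventually_sequentially partS_def)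
  then have ex: "x < partS m N" by simp
  define n where "n = (LEAST n. x < partS m n)"
  have n: "x < partS m n" unfolding n_def by (rule LeastI[of "\<lambda>n. x < partS m n" N, OF ex])
  have n0: "n \<noteq> 0"
  proof
    assume "n = 0" then show False using n x by (simp add: partS_0)
  qed
  then obtain j where j: "n = Suc j" by (cases n) auto
  have "\<not> x < partS m j"
  proof
    assume "x < partS m j"
    then have "n \<le> j" unfolding n_def by (rule Least_le)
    then show False using j by simp
  qed
  then have "partS m j \<le> x \<and> x < partS m (Suc j)" using n j by auto
  then show ?thesis by blast
qed

lemma bigF_interval:
  assumes pos: "\<And>k. m k > 0"
    and y: "partS m j < y" "y \<le> partS m (Suc j)"
  shows "bigF m y = G m j y"
proof -
  have ypos: "y > 0" using partS_nonneg[where m=m, OF pos, where j=j] y by linarith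
  have "(THE j. partS m j < y \<and> y \<le> partS m (Suc j)) = j"
  proof (rule the_equality)
    show "partS m j < y \<and> y \<le> partS m (Suc j)" using y by simp
  next
    fix k assume k: "partS m k < y \<and> y \<le> partS m (Suc k)"
    show "k = j"
    proof (rule ccontr)
      assume "k \<noteq> j"
      then consider "k < j" | "j < k" by linarith
      then show False
      proof cases
        case 1
        then have "partS m (Suc k) \<le> partS m j" by (intro partS_le[where m=m, OF pos]) simp
        then show False using k y by linarith
      next
        case 2
        then have "partS m (Suc j) \<le> partS m k" by (intro partS_le[where m=m, OF pos]) simp
        then show False using k y by linarith
      qed
    qed
  qed
  then show ?thesis using ypos by (simp add: bigF_def fj_eq[where m=m, OF pos])
qed

lemma phi_hi: "u \<ge> 15/16 \<Longrightarrow> phi u = - u + 3/2"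
  by (simp add: phi_def)
lemma phi_lo: "u < 1/16 \<Longrightarrow> phi u = - u"
  by (simp add: phi_def)

lemma G_agree:
  assumes pos: "\<And>k. m k > 0"
    and y: "partS m k + 15 * m k / 16 \<le> y" "y < partS m (Suc k) + m (Suc k) / 16"
  shows "G m k y = G m (Suc k) y"
proof -
  have mk: "m k > 0" "m (Suc k) > 0" using pos by auto
  have u1: "(y - partS m k) / m k \<ge> 15/16" using y mk by (simp add: field_simps)
  have u2: "(y - partS m (Suc k)) / m (Suc k) < 1/16" using y mk by (simp add: field_simps)
  show ?thesis
    unfolding G_def phi_hi[OF u1] phi_lo[OF u2] using mk by (simp add: partS_Suc field_simps)
qed

lemma G0_neg:
  assumes pos: "\<And>k. m k > 0" and y: "y \<le> 0"
  shows "G m 0 y = - y"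
proof -
  have "y / m 0 < 1/16" using y pos[of 0] by (simp add: field_simps)
  then show ?thesis using pos[of 0] by (simp add: G_def partS_0 phi_def)
qed

lemma loc0:
  assumes pos: "\<And>k. m k > 0" and x: "x < partS m (Suc 0)"
  shows "\<exists>e>0. \<forall>y. \<bar>y - x\<bar> < e \<longrightarrow> bigF m y = G m 0 y"
proof (intro exI[of _ "partS m (Suc 0) - x"] conjI allI impI)
  show "partS m (Suc 0) - x > 0" using x by simp
  fix y assume "\<bar>y - x\<bar> < partS m (Suc 0) - x"
  then have y: "y < partS m (Suc 0)" by linarith
  show "bigF m y = G m 0 y"
  proof (cases "y \<le> 0")
    case True then show ?thesis by (simp add: bigF_def G0_neg[where m=m, OF pos])
  next
    case False then show ?thesis using y by (intro bigF_interval[where m=m, OF pos]) (auto simp: partS_0)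
  qed
qed

lemma locS:
  assumes pos: "\<And>k. m k > 0" and x: "partS m (Suc k) \<le> x" "x < partS m (Suc (Suc k))"
  shows "\<exists>e>0. \<forall>y. \<bar>y - x\<bar> < e \<longrightarrow> bigF m y = G m (Suc k) y"
proof (intro exI[of _ "min (m k / 16) (partS m (Suc (Suc k)) - x)"] conjI allI impI)
  show "min (m k / 16) (partS m (Suc (Suc k)) - x) > 0" using x pos[of k] by simp
  fix y assume "\<bar>y - x\<bar> < min (m k / 16) (partS m (Suc (Suc k)) - x)"
  then have "\<bar>y - x\<bar> < m k / 16" "\<bar>y - x\<bar> < partS m (Suc (Suc k)) - x" by auto
  then have y: "y < partS m (Suc (Suc k))" "x - m k / 16 < y"
    by (smt (verit, best) abs_ge_minus_self abs_ge_self)+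
  show "bigF m y = G m (Suc k) y"
  proof (cases "y \<le> partS m (Suc k)")
    case True
    have "partS m k < y" using x y pos[of k] by (simp add: partS_Suc)
    then have "bigF m y = G m k y" using True by (intro bigF_interval[where m=m, OF pos])
    also have "\<dots> = G m (Suc k) y"
      by (rule G_agree[where m=m, OF pos]) (use x y True pos[of "Suc k"] in \<open>auto simp: partS_Suc\<close>)
    finally show ?thesis .
  next
    case False then show ?thesis using y by (intro bigF_interval[where m=m, OF pos]) auto
  qed
qed

lemma loc:
  assumes pos: "\<And>k. m k > 0" and x: "partS m j \<le> x" "x < partS m (Suc j)"
  shows "\<exists>e>0. \<forall>y. \<bar>y - x\<bar> < e \<longrightarrow> bigF m y = G m j y"
proof (cases j)
  case 0 then show ?thesis using loc0[where m=m, OF pos] x by simp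
next
  case (Suc k) then show ?thesis using locS[where m=m, OF pos] x by simp
qed

lemma loc_any:
  assumes pos: "\<And>k. m k > 0"
    and div: "filterlim (\<lambda>n. \<Sum>k<n. m k) at_top sequentially"
  shows "\<exists>j. \<exists>e>0. \<forall>y. \<bar>y - x\<bar> < e \<longrightarrow> bigF m y = G m j y"
proof (cases "x < partS m (Suc 0)")
  case True then show ?thesis using loc0[where m=m, OF pos] by blast
next
  case False
  then have "x \<ge> 0" using partS_nonneg[where m=m, OF pos, where j="Suc 0"] by linarith
  then obtain j where "partS m j \<le> x" "x < partS m (Suc j)" using partS_exists[where m=m, OF pos div] by blast
  then show ?thesis using loc[where m=m, OF pos] by blast
qed

lemma G_deriv:
  assumes pos: "\<And>k. m k > 0"
  shows "(G m j has_real_derivative dphi ((x - partS m j) / m j)) (at x)"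
proof -
  have "((\<lambda>x. phi ((x - partS m j) / m j)) has_real_derivative dphi ((x - partS m j) / m j) * (1 / m j)) (at x)"
    by (rule DERIV_chain2[OF phi_deriv]) (use pos[of j] in \<open>auto intro!: derivative_eq_intros\<close>)
  then have "((\<lambda>x. partS m j / 2 + m j * phi ((x - partS m j) / m j)) has_real_derivative
      m j * (dphi ((x - partS m j) / m j) * (1 / m j))) (at x)"
    by (auto intro!: derivative_eq_intros)
  then show ?thesis using pos[of j] unfolding G_def[abs_def] by simp
qed



theorem proposition5p3:
  fixes m :: "nat \<Rightarrow> real"
  assumes pos: "\<And>k. m k > 0"
    and div: "filterlim (\<lambda>n. \<Sum>k<n. m k) at_top sequentially"
    and lim0: "m \<longlonglongrightarrow> 0"
  shows "continuous_on UNIV (bigF m)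
    \<and> (\<forall>x. bigF m differentiable (at x))
    \<and> bdd_below (range (bigF m))
    \<and> (\<forall>x. \<exists>e>0. \<exists>L. L-lipschitz_on (ball x e) (deriv (bigF m)))
    \<and> (\<forall>j. bigF m (partS m j) = partS m j / 2)
    \<and> (\<forall>j. (bigF m has_real_derivative -1) (at (partS m j)))"
proof -
  have trans: "(bigF m has_real_derivative dphi ((y - partS m j) / m j)) (at y)"
    if "e > 0" "\<forall>z. \<bar>z - x\<bar> < e \<longrightarrow> bigF m z = G m j z" "\<bar>y - x\<bar> < e" for x y e j
  proof (rule has_field_derivative_transform_within_open[OF G_deriv[where m=m, OF pos], where S="ball x e"])
    show "open (ball x e)" by simp
    show "y \<in> ball x e" using that by (simp add: dist_real_def abs_minus_commute)
    fix z assume "z \<in> ball x e"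
    then show "G m j z = bigF m z" using that by (simp add: dist_real_def abs_minus_commute)
  qed
  have der: "\<exists>j e. e > 0 \<and> (\<forall>y. \<bar>y - x\<bar> < e \<longrightarrow> (bigF m has_real_derivative dphi ((y - partS m j) / m j)) (at y))" for x
  proof -
    obtain j e where e: "e > 0" "\<forall>z. \<bar>z - x\<bar> < e \<longrightarrow> bigF m z = G m j z"
      using loc_any[where m=m, OF pos div] by blast
    then show ?thesis using trans[OF e] by blast
  qed
  have diff: "\<forall>x. bigF m differentiable (at x)"
  proof
    fix x obtain j e where "e > 0" "\<forall>y. \<bar>y - x\<bar> < e \<longrightarrow> (bigF m has_real_derivative dphi ((y - partS m j) / m j)) (at y)"
      using der by blast
    then show "bigF m differentiable (at x)" using real_differentiable_def by force
  qed
  have cont: "continuous_on UNIV (bigF m)"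
    by (rule continuous_at_imp_continuous_on) (use diff differentiable_imp_continuous_within in blast)
  have lip: "\<forall>x. \<exists>e>0. \<exists>L. L-lipschitz_on (ball x e) (deriv (bigF m))"
  proof
    fix x obtain j e where e: "e > 0" and d: "\<forall>y. \<bar>y - x\<bar> < e \<longrightarrow> (bigF m has_real_derivative dphi ((y - partS m j) / m j)) (at y)"
      using der by blast
    have dd: "deriv (bigF m) y = dphi ((y - partS m j) / m j)" if "y \<in> ball x e" for y
      using that d by (intro DERIV_imp_deriv) (simp add: dist_real_def abs_minus_commute)
    have mj: "m j > 0" using pos by simp
    have "(3000 / m j)-lipschitz_on (ball x e) (deriv (bigF m))"
    proof (rule lipschitz_onI)
      fix y z assume y: "y \<in> ball x e" and z: "z \<in> ball x e"
      have "dist (dphi ((y - partS m j) / m j)) (dphi ((z - partS m j) / m j))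
          \<le> 3000 * dist ((y - partS m j) / m j) ((z - partS m j) / m j)"
        by (rule lipschitz_onD[OF dphi_lip]) auto
      also have "dist ((y - partS m j) / m j) ((z - partS m j) / m j) = dist y z / m j"
        using mj by (simp add: dist_real_def diff_divide_distrib[symmetric] abs_divide)
      finally show "dist (deriv (bigF m) y) (deriv (bigF m) z) \<le> 3000 / m j * dist y z"
        using dd[OF y] dd[OF z] by simp
    qed (use mj in simp)
    then show "\<exists>e>0. \<exists>L. L-lipschitz_on (ball x e) (deriv (bigF m))" using e by blast
  qed
  have vals: "\<forall>j. bigF m (partS m j) = partS m j / 2"
  proof
    fix j show "bigF m (partS m j) = partS m j / 2"
    proof (cases j)
      case 0 then show ?thesis by (simp add: bigF_def partS_0)
    next
      case (Suc k)
      have "bigF m (partS m (Suc k)) = G m k (partS m (Suc k))"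
        using pos[of k] by (intro bigF_interval[where m=m, OF pos]) (auto simp: partS_Suc)
      also have "\<dots> = partS m (Suc k) / 2"
        using pos[of k] by (simp add: G_def partS_Suc phi_1)
      finally show ?thesis using Suc by simp
    qed
  qed
  have ders: "\<forall>j. (bigF m has_real_derivative -1) (at (partS m j))"
  proof
    fix j
    have "partS m j < partS m (Suc j)" using pos[of j] by (simp add: partS_Suc)
    then obtain e where e: "e > 0" "\<forall>z. \<bar>z - partS m j\<bar> < e \<longrightarrow> bigF m z = G m j z"
      using loc[where m=m, OF pos, of j "partS m j"] by auto
    have "(bigF m has_real_derivative dphi ((partS m j - partS m j) / m j)) (at (partS m j))"
      by (rule trans[OF e]) (use e in simp)
    then show "(bigF m has_real_derivative -1) (at (partS m j))" by (simp add: dphi_def)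
  qed
  have bdd: "bdd_below (range (bigF m))"
  proof -
    have "continuous_on {0..1} phi"
      by (rule continuous_at_imp_continuous_on) (use DERIV_isCont[OF phi_deriv] in blast)
    then have "compact (phi ` {0..1})" by (rule compact_continuous_image) simp
    then obtain P where P: "\<forall>v\<in>phi ` {0..1}. norm v \<le> P"
      using compact_imp_bounded bounded_iff by metis
    have P0: "P \<ge> 0" using P by (metis abs_ge_zero atLeastAtMost_iff image_eqI order_trans real_norm_def zero_le_one order_refl)
    have "Bseq m" using lim0 by (rule convergent_imp_Bseq[OF convergentI])
    then obtain B where B: "B > 0" "\<forall>n. norm (m n) \<le> B" by (auto elim: BseqE)
    have "- (B * P) \<le> bigF m y" for y
    proof (cases "y \<le> 0")
      case True
      have "0 \<le> B * P" using B P0 by simp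
      then show ?thesis using True by (simp add: bigF_def)
    next
      case False
      then obtain j where j: "partS m j \<le> y" "y < partS m (Suc j)"
        using partS_exists[where m=m, OF pos div, of y] by auto
      obtain i where i: "partS m i < y" "y \<le> partS m (Suc i)"
      proof (cases "partS m j < y")
        case True then show ?thesis using that j by auto
      next
        case False
        then have yj: "y = partS m j" using j by simp
        show ?thesis
        proof (cases j)
          case 0 then show ?thesis using yj \<open>\<not> y \<le> 0\<close> by (simp add: partS_0)
        next
          case (Suc k)
          then show ?thesis using that[of k] yj pos[of k] by (simp add: partS_Suc)
        qed
      qed
      define u where "u = (y - partS m i) / m i"
      have mi: "m i > 0" using pos by simp
      have u: "u \<in> {0..1}" using i mi by (simp add: u_def field_simps partS_Suc)
      have "\<bar>m i * phi u\<bar> \<le> B * P"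
        unfolding abs_mult using B P u by (intro mult_mono) auto
      then have "- (B * P) \<le> m i * phi u" by linarith
      moreover have "bigF m y = partS m i / 2 + m i * phi u"
        using bigF_interval[where m=m, OF pos i] by (simp add: G_def u_def)
      moreover have "partS m i \<ge> 0" by (rule partS_nonneg[where m=m, OF pos])
      ultimately show ?thesis by linarith
    qed
    then show ?thesis by (intro bdd_belowI2) 
  qed
  show ?thesis using cont diff bdd lip vals ders by blast
qed


end
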